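(* Let $p$ be a prime and $m\ge1$. Suppose $\underline{x}=(x_{1},\dots,x_{m})$ and $\underline{y}=(y_{1},\dots,y_{m})$ are elements of $SU(p)^{m}$ with $\underline{c}:=[\underline{x},\underline{y}]=(c,\dots,c)\in\Delta(\mathbb{Z}/p)$ for some $c\in Z(SU(p))$, $c\ne 1$. Let $\underline{z}\in SU(p)^{m}$ satisfy $[\underline{x},\underline{z}],[\underline{y},\underline{z}]\in\Delta(\mathbb{Z}/p)$, and write $[\underline{x},\underline{z}]=\underline{c}^{b}$ and $[\underline{y},\underline{z}]=\underline{c}^{a}$ with integers $0\le a,b<p$. Then there is $\underline{w}=(w_{1},\dots,w_{m})\in Z(SU(p)^{m})$ such that $\underline{z}=\underline{w}\,\underline{x}^{-a}\underline{y}^{b}$, i.e. $z_{i}=w_{i}x_{i}^{-a}y_{i}^{b}$ for all $i$.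
   Context: $Z(SU(p))\cong\mathbb{Z}/p$ is the center of $SU(p)$, and $\Delta(\mathbb{Z}/p)=\{(c,\dots,c): c\in Z(SU(p))\}\subset Z(SU(p)^m)$. The commutator is $[u,v]=uvu^{-1}v^{-1}$. *)

theory Defs
  imports "HOL-Analysis.Analysis"
begin

definition cadj :: "complex^'n^'n \<Rightarrow> complex^'n^'n" where
  "cadj A = (\<chi> i j. cnj (A $ j $ i))"

definition SU :: "(complex^'n^'n) set" where
  "SU = {A. A ** cadj A = mat 1 \<and> cadj A ** A = mat 1 \<and> det A = 1}"

definition ZSU :: "(complex^'n^'n) set" where
  "ZSU = {c \<in> SU. \<forall>g\<in>SU. c ** g = g ** c}"

primrec mpow :: "'a::semiring_1^'n^'n \<Rightarrow> nat \<Rightarrow> 'a^'n^'n" where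
  "mpow A 0 = mat 1"
| "mpow A (Suc k) = A ** mpow A k"

definition comm :: "complex^'n^'n \<Rightarrow> complex^'n^'n \<Rightarrow> complex^'n^'n" where
  "comm u v = u ** v ** matrix_inv u ** matrix_inv v"

end

theory Submission imports Defs begin

definition smul :: "complex \<Rightarrow> complex^'n^'n \<Rightarrow> complex^'n^'n" where
  "smul a A = (\<chi> i j. a * A$i$j)"

lemma smul_left: "smul a A ** B = smul a (A ** B)"
  by (simp add: smul_def matrix_matrix_mult_def vec_eq_iff sum_distrib_left mult.assoc)
lemma smul_right: "A ** smul a B = smul a (A ** B)"
  by (simp add: smul_def matrix_matrix_mult_def vec_eq_iff sum_distrib_left mult.assoc mult.left_commute)
lemma smul_smul: "smul a (smul b A) = smul (a*b) A"
  by (simp add: smul_def vec_eq_iff mult.assoc)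
lemma smul_1: "smul 1 A = A"
  by (simp add: smul_def vec_eq_iff)
lemma mat_mult_left: "mat a ** A = smul a (A::complex^'n^'n)"
  by (simp add: smul_def matrix_matrix_mult_def vec_eq_iff mat_def if_distrib[of "\<lambda>x. x * _"] cong: if_cong)
lemma mat_mult_right: "A ** mat a = smul a (A::complex^'n^'n)"
  by (simp add: smul_def matrix_matrix_mult_def vec_eq_iff mat_def if_distrib mult.commute cong: if_cong)
lemma smul_mat: "smul a (mat b) = mat (a*b)"
  by (simp add: smul_def vec_eq_iff mat_def)
lemma mpow_mat: "mpow (mat a :: complex^'n^'n) k = mat (a^k)"
  by (induct k) (simp_all add: mat_mult_left smul_mat)
lemma trace_smul: "trace (smul a A) = a * trace A"
  by (simp add: trace_def smul_def sum_distrib_left)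
lemma cadj_mult: "cadj (A ** B) = cadj B ** cadj (A::complex^'n^'n)"
  by (simp add: cadj_def matrix_matrix_mult_def vec_eq_iff mult.commute)
lemma cadj_cadj: "cadj (cadj A) = A"
  by (simp add: cadj_def vec_eq_iff)
lemma cadj_mat1: "cadj (mat 1 :: complex^'n^'n) = mat 1"
  by (simp add: cadj_def vec_eq_iff mat_def)

lemma SU_inv_eq: assumes "A \<in> SU" shows "matrix_inv A = cadj A"
proof -
  have h: "A ** cadj A = mat 1" "cadj A ** A = mat 1" using assms by (auto simp: SU_def)
  define B where "B = matrix_inv A"
  have "A ** B = mat 1 \<and> B ** A = mat 1"
    unfolding B_def matrix_inv_def by (rule someI[of _ "cadj A"]) (use h in auto)
  then have "cadj A ** (A ** B) = cadj A" by simp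
  then have "(cadj A ** A) ** B = cadj A" by (simp add: matrix_mul_assoc)
  then show ?thesis using h by (simp add: B_def)
qed

lemma SU_mult: assumes "A \<in> SU" "B \<in> SU" shows "A ** B \<in> SU"
proof -
  have h: "A ** cadj A = mat 1" "cadj A ** A = mat 1" "det A = 1"
     "B ** cadj B = mat 1" "cadj B ** B = mat 1" "det B = 1" using assms by (auto simp: SU_def)
  have "A ** B ** cadj (A ** B) = A ** (B ** cadj B) ** cadj A"
    by (simp add: cadj_mult matrix_mul_assoc)
  also have "\<dots> = mat 1" using h by simp
  finally have 1: "A ** B ** cadj (A ** B) = mat 1" .
  have "cadj (A ** B) ** (A ** B) = cadj B ** (cadj A ** A) ** B"
    by (simp add: cadj_mult matrix_mul_assoc)
  also have "\<dots> = mat 1" using h by simp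
  finally show ?thesis using 1 h by (simp add: SU_def det_mul)
qed

lemma SU_cadj: assumes "A \<in> SU" shows "cadj A \<in> SU"
proof -
  have h: "A ** cadj A = mat 1" "cadj A ** A = mat 1" "det A = 1" using assms by (auto simp: SU_def)
  have "det A * det (cadj A) = 1" by (metis det_mul h(1) det_I)
  then have "det (cadj A) = 1" using h by simp
  then show ?thesis using h by (simp add: SU_def cadj_cadj)
qed

lemma SU_one: "(mat 1 :: complex^'n^'n) \<in> SU"
  by (simp add: SU_def cadj_mat1)

lemma SU_mpow: "A \<in> SU \<Longrightarrow> mpow A k \<in> SU"
  by (induct k) (simp_all add: SU_one SU_mult)

lemma SU_inv: "A \<in> SU \<Longrightarrow> matrix_inv A \<in> SU"
  by (simp add: SU_inv_eq SU_cadj)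

lemma SU_rinv: "A \<in> SU \<Longrightarrow> A ** matrix_inv A = mat 1"
  by (simp add: SU_inv_eq SU_def)
lemma SU_linv: "A \<in> SU \<Longrightarrow> matrix_inv A ** A = mat 1"
  by (simp add: SU_inv_eq SU_def)

definition qc :: "complex^'n^'n \<Rightarrow> complex^'n^'n \<Rightarrow> complex \<Rightarrow> bool" where
  "qc u M a \<longleftrightarrow> u ** M = smul a (M ** u)"

lemma qc_mult: "qc u M a \<Longrightarrow> qc u N b \<Longrightarrow> qc u (M ** N) (a*b)"
proof (unfold qc_def)
  assume 1: "u ** M = smul a (M ** u)" and 2: "u ** N = smul b (N ** u)"
  have "u ** (M ** N) = (u ** M) ** N" by (simp add: matrix_mul_assoc)
  also have "\<dots> = smul a (M ** (u ** N))" using 1 by (simp add: smul_left matrix_mul_assoc)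
  also have "\<dots> = smul (a*b) (M ** N ** u)" using 2 by (simp add: smul_right smul_smul matrix_mul_assoc)
  finally show "u ** (M ** N) = smul (a * b) (M ** N ** u)" .
qed

lemma qc_one: "qc u (mat 1) 1"
  by (simp add: qc_def smul_1)
lemma qc_self: "qc u u 1"
  by (simp add: qc_def smul_1)
lemma qc_mpow: "qc u M a \<Longrightarrow> qc u (mpow M k) (a^k)"
  by (induct k) (simp_all add: qc_one qc_mult)
lemma qc_smul: "qc u M a \<Longrightarrow> qc u (smul b M) a"
  by (simp add: qc_def smul_left smul_right smul_smul mult.commute)

lemma qc_inv: assumes "qc u M a" "M ** Mi = mat 1" "Mi ** M = mat 1" "a \<noteq> 0"
  shows "qc u Mi (1/a)"
proof -
  have 1: "u ** M = smul a (M ** u)" using assms(1) by (simp add: qc_def)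
  have "Mi ** (u ** M) ** Mi = Mi ** u" using assms(2) by (simp add: matrix_mul_assoc[symmetric])
  moreover have "Mi ** (u ** M) ** Mi = smul a (u ** Mi)" using 1 assms(3)
    by (simp add: smul_left smul_right matrix_mul_assoc)
  ultimately have "smul (1/a) (Mi ** u) = smul (1/a) (smul a (u ** Mi))" by simp
  then show ?thesis using assms(4) by (simp add: qc_def smul_smul smul_1)
qed

lemma qc_trace: assumes "qc u M a" "u ** ui = mat 1" "ui ** u = mat 1" "a \<noteq> 1"
  shows "trace M = 0"
proof -
  have 1: "u ** M = smul a (M ** u)" using assms(1) by (simp add: qc_def)
  have "trace (u ** M ** ui) = trace (M ** ui ** u)"
    by (metis matrix_mul_assoc trace_mul_sym)
  also have "\<dots> = trace M" using assms(3) by (simp add: matrix_mul_assoc[symmetric])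
  finally have "trace M = trace (u ** M ** ui)" by simp
  also have "\<dots> = a * trace M" using 1 assms(2)
    by (simp add: smul_left trace_smul matrix_mul_assoc[symmetric])
  finally have "(1 - a) * trace M = 0" by (simp add: algebra_simps)
  then show ?thesis using assms(4) by simp
qed

lemma qc_swap: "qc u v a \<Longrightarrow> a \<noteq> 0 \<Longrightarrow> qc v u (1/a)"
  unfolding qc_def by (metis smul_smul smul_1 nonzero_divide_eq_eq mult.commute)

lemma comm_qc: assumes "u \<in> SU" "v \<in> SU" "comm u v = mat a" shows "qc u v a"
proof -
  let ?ui = "matrix_inv u" and ?vi = "matrix_inv v"
  have "comm u v ** (v ** u) = u ** v ** ?ui ** (?vi ** v) ** u"
    by (simp add: comm_def matrix_mul_assoc)
  also have "\<dots> = u ** v ** ?ui ** u" using assms by (simp add: SU_linv)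
  also have "\<dots> = u ** v ** (?ui ** u)" by (simp add: matrix_mul_assoc)
  also have "\<dots> = u ** v" using assms by (simp add: SU_linv del: matrix_mul_assoc)
  finally show ?thesis using assms(3) by (simp add: qc_def mat_mult_left)
qed


definition diag :: "('n \<Rightarrow> complex) \<Rightarrow> complex^'n^'n" where
  "diag f = (\<chi> a b. if a = b then f a else 0)"

lemma diag_mult_left: "diag f ** A = (\<chi> a b. f a * A$a$b)"
  by (simp add: diag_def matrix_matrix_mult_def vec_eq_iff if_distrib[of "\<lambda>x. x * _"] cong: if_cong)
lemma diag_mult_right: "A ** diag f = (\<chi> a b. A$a$b * f b)"
  by (simp add: diag_def matrix_matrix_mult_def vec_eq_iff if_distrib[of "\<lambda>x. _ * x"] cong: if_cong)
lemma cadj_diag: "cadj (diag f) = diag (\<lambda>a. cnj (f a))"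
  by (auto simp: cadj_def diag_def vec_eq_iff)
lemma det_diag: "det (diag f) = prod f UNIV"
  by (subst det_diagonal) (auto simp: diag_def)
lemma diag_unit: "(\<And>a. f a * cnj (f a) = 1) \<Longrightarrow> diag f ** cadj (diag f) = mat 1 \<and> cadj (diag f) ** diag f = mat 1"
  unfolding cadj_diag diag_mult_left by (auto simp: diag_def vec_eq_iff mat_def mult.commute)

lemma D_SU: fixes j k :: "'n::finite" assumes "j \<noteq> k"
  shows "diag (\<lambda>a. if a = j then \<i> else if a = k then -\<i> else 1) \<in> SU"
proof -
  let ?f = "\<lambda>a. if a = j then \<i> else if a = k then -\<i> else 1"
  have u: "\<And>a. ?f a * cnj (?f a) = 1" by auto
  have 1: "prod ?f UNIV = ?f j * prod ?f (UNIV - {j})"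
    by (rule prod.remove) simp_all
  have 2: "prod ?f (UNIV - {j}) = ?f k * prod ?f (UNIV - {j} - {k})"
    by (rule prod.remove) (use assms in auto)
  have 3: "prod ?f (UNIV - {j} - {k}) = 1" by (rule prod.neutral) auto
  have "prod ?f UNIV = 1" using assms unfolding 1 2 3 by simp
  then show ?thesis using diag_unit[OF u] by (simp add: SU_def det_diag)
qed

lemma ZSU_diag: assumes "c \<in> ZSU" "a \<noteq> b" shows "c $ a $ b = 0"
proof -
  let ?f = "\<lambda>x. if x = a then \<i> else if x = b then -\<i> else 1"
  have "c ** diag ?f = diag ?f ** c" using assms D_SU[OF assms(2)] by (auto simp: ZSU_def)
  then have "(c ** diag ?f)$a$b = (diag ?f ** c)$a$b" by simp
  then have "c$a$b * ?f b = ?f a * c$a$b" by (simp only: diag_mult_left diag_mult_right vec_lambda_beta)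
  then have "c$a$b * (-\<i>) = \<i> * c$a$b" using assms by simp
  then show ?thesis by (simp add: algebra_simps)
qed

definition Pm :: "'n \<Rightarrow> 'n \<Rightarrow> complex^'n^'n" where
  "Pm j k = (\<chi> a b. if Transposition.transpose j k a = b then (if b = j then -1 else 1) else 0)"

lemma Pm_SU: fixes j k :: "'n::finite" assumes "j \<noteq> k" shows "Pm j k \<in> SU"
proof -
  let ?t = "Transposition.transpose j k"
  let ?f = "\<lambda>a::'n. if a = j then -1 else (1::complex)"
  have P: "Pm j k = (\<chi> a. diag ?f $ ?t a)"
    by (auto simp: Pm_def diag_def vec_eq_iff)
  have "det (Pm j k) = of_int (sign ?t) * det (diag ?f)"
    unfolding P by (rule det_permute_rows) (simp add: permutes_swap_id)
  moreover have "prod ?f UNIV = ?f j * prod ?f (UNIV - {j})" by (rule prod.remove) simp_all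
  moreover have "prod ?f (UNIV - {j}) = 1" by (rule prod.neutral) auto
  ultimately have d: "det (Pm j k) = 1" using assms by (simp add: sign_swap_id det_diag)
  have tt: "\<And>a. ?t (?t a) = a" by simp
  have ti: "\<And>a b. ?t a = ?t b \<longleftrightarrow> a = b" by (metis tt)
  have tj: "\<And>x. ?t x = j \<longleftrightarrow> x = k" "\<And>x. ?t x = k \<longleftrightarrow> x = j"
    by (auto simp: Transposition.transpose_def)
  have 1: "Pm j k ** cadj (Pm j k) = mat 1"
  proof -
    have "\<And>a b. (\<Sum>c\<in>UNIV. Pm j k $ a $ c * cnj (Pm j k $ b $ c)) = (if a = b then 1 else 0)"
    proof -
      fix a b
      have "(\<Sum>c\<in>UNIV. Pm j k $ a $ c * cnj (Pm j k $ b $ c)) =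
            (\<Sum>c\<in>UNIV. if c = ?t a then (if ?t a = ?t b then 1 else 0) else 0)"
        by (rule sum.cong) (auto simp: Pm_def)
      also have "\<dots> = (if a = b then 1 else 0)" by (simp add: sum.delta' ti)
      finally show "?thesis a b" .
    qed
    then show ?thesis by (simp add: matrix_matrix_mult_def cadj_def vec_eq_iff mat_def)
  qed
  have 2: "cadj (Pm j k) ** Pm j k = mat 1"
  proof -
    have "\<And>a b. (\<Sum>c\<in>UNIV. cnj (Pm j k $ c $ a) * Pm j k $ c $ b) = (if a = b then 1 else 0)"
    proof -
      fix a b
      have "(\<Sum>c\<in>UNIV. cnj (Pm j k $ c $ a) * Pm j k $ c $ b) =
            (\<Sum>c\<in>UNIV. if c = ?t a then (if a = b then 1 else 0) else 0)"
        by (rule sum.cong) (auto simp: Pm_def ti tj)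
      also have "\<dots> = (if a = b then 1 else 0)" by (simp add: sum.delta')
      finally show "?thesis a b" .
    qed
    then show ?thesis by (simp add: matrix_matrix_mult_def cadj_def vec_eq_iff mat_def)
  qed
  show ?thesis using 1 2 d by (simp add: SU_def)
qed

lemma ZSU_scalar: fixes c :: "complex^'n^'n" assumes "c \<in> ZSU" shows "\<exists>z. c = mat z"
proof -
  have cd: "c = diag (\<lambda>a. c$a$a)" using ZSU_diag[OF assms] by (auto simp: diag_def vec_eq_iff)
  have eq: "c$j$j = c$k$k" if "j \<noteq> k" for j k
  proof -
    have "c ** Pm j k = Pm j k ** c" using assms Pm_SU[OF that] by (auto simp: ZSU_def)
    then have "diag (\<lambda>a. c$a$a) ** Pm j k = Pm j k ** diag (\<lambda>a. c$a$a)" using cd by simp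
    then have "(diag (\<lambda>a. c$a$a) ** Pm j k)$j$k = (Pm j k ** diag (\<lambda>a. c$a$a))$j$k" by simp
    then have "c$j$j * Pm j k $ j $ k = Pm j k $ j $ k * c$k$k"
      by (simp only: diag_mult_left diag_mult_right vec_lambda_beta)
    then show ?thesis using that by (simp add: Pm_def)
  qed
  obtain a0 :: 'n where True by simp
  have "c = mat (c$a0$a0)"
    using ZSU_diag[OF assms] eq by (auto simp: mat_def vec_eq_iff) (metis)
  then show ?thesis by blast
qed

lemma root_inj: fixes z :: complex
  assumes p: "prime p" and zp: "z^p = 1" and z1: "z \<noteq> 1" and i: "i < p" and k: "k < p"
    and eq: "z^i = z^k" shows "i = k"
proof (rule ccontr)
  assume ne: "i \<noteq> k"
  have z0: "z \<noteq> 0" using zp p by (metis prime_gt_0_nat power_0_left less_numeral_extra(3) zero_neq_one)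
  have gen: "z = 1" if "a < b" "b < p" "z^a = z^b" for a b
  proof -
    define d where "d = b - a"
    have "a + d = b" using that by (simp add: d_def)
    then have "z^b = z^a * z^d" by (metis power_add)
    then have zd: "z^d = 1" using that z0 by simp
    have d0: "d \<noteq> 0" "d < p" using that by (auto simp: d_def)
    have "\<not> p dvd d" using d0 by (simp add: nat_dvd_not_less)
    then have "coprime p d" using p by (simp add: prime_imp_coprime)
    then have "coprime d p" by (simp add: coprime_commute)
    then have g: "gcd d p = 1" by simp
    obtain q r where "d * q = p * r + gcd d p" using bezout_nat[OF d0(1)] by blast
    then have "d * q = p * r + 1" using g by simp
    then have "z^(d*q) = z^(p*r) * z" by (simp add: power_add)
    then show "z = 1" using zd zp by (simp add: power_mult)
  qed
  show False
  proof (cases "i < k")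
    case True then show ?thesis using gen[OF True k eq] z1 by simp
  next
    case False then have "k < i" using ne by simp
    then show ?thesis using gen[OF _ i, of k] eq z1 by simp
  qed
qed

definition Fm :: "complex^'n^'n \<Rightarrow> complex^'n^'n \<Rightarrow> complex" where
  "Fm A B = trace (cadj A ** B)"

lemma inner_Fm: "inner A B = Re (Fm A B)"
proof -
  have c: "\<And>a b::complex. inner a b = Re (cnj a * b)" by (simp add: inner_complex_def)
  have "inner A B = (\<Sum>i\<in>UNIV. \<Sum>j\<in>UNIV. Re (cnj (A$i$j) * B$i$j))"
    by (simp add: inner_vec_def c)
  also have "\<dots> = (\<Sum>j\<in>UNIV. \<Sum>i\<in>UNIV. Re (cnj (A$i$j) * B$i$j))"
    by (rule sum.swap)
  also have "\<dots> = Re (Fm A B)"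
    by (simp add: Fm_def trace_def cadj_def matrix_matrix_mult_def Re_sum)
  finally show ?thesis .
qed

lemma cadj_smul: "cadj (smul a A) = smul (cnj a) (cadj A)"
  by (simp add: cadj_def smul_def vec_eq_iff)
lemma Fm_smul_left: "Fm (smul a A) B = cnj a * Fm A B"
  by (simp add: Fm_def cadj_smul smul_left trace_smul)
lemma Fm_smul_right: "Fm A (smul b B) = b * Fm A B"
  by (simp add: Fm_def smul_right trace_smul)

lemma trace_mat: "trace (mat a :: complex^'n^'n) = a * of_nat CARD('n)"
  by (simp add: trace_def mat_def)

lemma mat_comm: fixes A :: "complex^'n^'n" shows "mat a ** A = A ** mat a"
  by (simp add: mat_mult_left mat_mult_right)

lemma matrix_sub_ldistrib': "(A::complex^'n^'n) ** (B - C) = A ** B - A ** C"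
  by (simp add: matrix_matrix_mult_def vec_eq_iff sum_subtractf algebra_simps)
lemma matrix_sub_rdistrib': "((B::complex^'n^'n) - C) ** A = B ** A - C ** A"
  by (simp add: matrix_matrix_mult_def vec_eq_iff sum_subtractf algebra_simps)

lemma trace_zero_qc: assumes "u \<in> SU" "qc u T a" "a \<noteq> 1" shows "trace T = 0"
  using qc_trace[OF assms(2) SU_rinv[OF assms(1)] SU_linv[OF assms(1)] assms(3)] .


lemma qc_commute: "u ** W = W ** u \<Longrightarrow> qc u W 1"
  by (simp add: qc_def smul_1)

lemma qc_inv_SU: "qc u M a \<Longrightarrow> M \<in> SU \<Longrightarrow> a \<noteq> 0 \<Longrightarrow> qc u (matrix_inv M) (1/a)"
  using qc_inv[of u M a "matrix_inv M"] by (simp add: SU_rinv SU_linv)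

lemma irred:
  fixes x y W :: "complex^'n^'n" and z :: complex
  assumes p: "prime CARD('n)" and x: "x \<in> SU" and y: "y \<in> SU" and qxy: "qc x y z"
    and zp: "z ^ CARD('n) = 1" and z1: "z \<noteq> 1"
    and Wx: "x ** W = W ** x" and Wy: "y ** W = W ** y"
  shows "\<exists>\<mu>. W = mat \<mu>"
proof -
  let ?p = "CARD('n)"
  have z0: "z \<noteq> 0" using zp p by (metis prime_gt_0_nat power_0_left less_numeral_extra(3) zero_neq_one)
  define e where "e = 1 / z"
  have e0: "e \<noteq> 0" and ep: "e ^ ?p = 1" and e1: "e \<noteq> 1"
    using z0 zp z1 by (auto simp: e_def power_one_over)
  have qyx: "qc y x e" unfolding e_def by (rule qc_swap[OF qxy z0])
  define g where "g i j = mpow x i ** mpow y j" for i j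
  have gSU: "g i j \<in> SU" for i j by (simp add: g_def SU_mult SU_mpow x y)
  have gx: "qc x (g i j) (z^j)" for i j
    using qc_mult[OF qc_mpow[OF qc_self, of x i] qc_mpow[OF qxy, of j]] by (simp add: g_def)
  have gy: "qc y (g i j) (e^i)" for i j
    using qc_mult[OF qc_mpow[OF qyx, of i] qc_mpow[OF qc_self, of y j]] by (simp add: g_def)
  have trz: "trace T = 0" if "qc x T a" "qc y T b" "a \<noteq> 1 \<or> b \<noteq> 1" for T a b
    using that trace_zero_qc[OF x] trace_zero_qc[OF y] by blast
  have Fgg: "Fm (g i j) (g k l) = (if i = k \<and> j = l then of_nat ?p else 0)"
    if "i < ?p" "j < ?p" "k < ?p" "l < ?p" for i j k l
  proof -
    have F: "Fm (g i j) (g k l) = trace (matrix_inv (g i j) ** g k l)"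
      by (simp add: Fm_def SU_inv_eq gSU)
    show ?thesis
    proof (cases "i = k \<and> j = l")
      case True then show ?thesis using F by (simp add: SU_linv gSU trace_I)
    next
      case False
      have q1: "qc x (matrix_inv (g i j) ** g k l) (1 / z^j * z^l)"
        by (rule qc_mult[OF qc_inv_SU[OF gx gSU] gx]) (simp add: z0)
      have q2: "qc y (matrix_inv (g i j) ** g k l) (1 / e^i * e^k)"
        by (rule qc_mult[OF qc_inv_SU[OF gy gSU] gy]) (simp add: e0)
      have "z^j \<noteq> z^l \<or> e^i \<noteq> e^k"
        using False root_inj[OF p zp z1, of j l] root_inj[OF p ep e1, of i k] that by blast
      then have "1 / z^j * z^l \<noteq> 1 \<or> 1 / e^i * e^k \<noteq> 1" using z0 e0 by auto
      then show ?thesis using F trz[OF q1 q2] False by simp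
    qed
  qed
  define \<mu> where "\<mu> = trace W / of_nat ?p"
  define C where "C = W - mat \<mu>"
  have Cx: "x ** C = C ** x" using Wx by (simp add: C_def matrix_sub_ldistrib' matrix_sub_rdistrib' mat_comm)
  have Cy: "y ** C = C ** y" using Wy by (simp add: C_def matrix_sub_ldistrib' matrix_sub_rdistrib' mat_comm)
  have trC: "trace C = 0" using p by (simp add: C_def trace_sub trace_mat \<mu>_def)
  have FgC: "Fm (g i j) C = 0" if "i < ?p" "j < ?p" for i j
  proof -
    have F: "Fm (g i j) C = trace (matrix_inv (g i j) ** C)"
      by (simp add: Fm_def SU_inv_eq gSU)
    show ?thesis
    proof (cases "i = 0 \<and> j = 0")
      case True
      then have "g i j = mat 1" by (simp add: g_def)
      then show ?thesis using trC by (simp add: Fm_def cadj_mat1)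
    next
      case False
      have q1: "qc x (matrix_inv (g i j) ** C) (1 / z^j * 1)"
        by (rule qc_mult[OF qc_inv_SU[OF gx gSU] qc_commute[OF Cx]]) (simp add: z0)
      have q2: "qc y (matrix_inv (g i j) ** C) (1 / e^i * 1)"
        by (rule qc_mult[OF qc_inv_SU[OF gy gSU] qc_commute[OF Cy]]) (simp add: e0)
      have "z^j \<noteq> z^0 \<or> e^i \<noteq> e^0"
        using False root_inj[OF p zp z1, of j 0] root_inj[OF p ep e1, of i 0] that p
        by (metis prime_gt_0_nat)
      then have "1 / z^j * 1 \<noteq> 1 \<or> 1 / e^i * 1 \<noteq> 1" using z0 e0 by auto
      then show ?thesis using F trz[OF q1 q2] by simp
    qed
  qed
  define E where "E = (\<lambda>(i,j,s). if s then smul \<i> (g i j) else g i j)"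
  define I where "I = {..<?p} \<times> {..<?p} \<times> (UNIV :: bool set)"
  have FE: "Fm (E (i,j,s)) (E (k,l,t)) = (if s = t then 1 else if s then -\<i> else \<i>) * Fm (g i j) (g k l)" for i j k l s t
    by (auto simp: E_def Fm_smul_left Fm_smul_right)
  have innE: "inner (E u) (E v) = (if u = v then real ?p else 0)" if "u \<in> I" "v \<in> I" for u v
  proof -
    obtain i j s k l t where uv: "u = (i,j,s)" "v = (k,l,t)" by (cases u, cases v) auto
    have b: "i < ?p" "j < ?p" "k < ?p" "l < ?p" using that uv by (auto simp: I_def)
    show ?thesis unfolding uv inner_Fm FE Fgg[OF b] by auto
  qed
  have pne: "real ?p \<noteq> 0" by simp
  have injE: "inj_on E I"
  proof (rule inj_onI)
    fix u v assume "u \<in> I" "v \<in> I" "E u = E v"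
    then have "inner (E u) (E v) = real ?p" using innE by simp
    then show "u = v" using innE[OF \<open>u \<in> I\<close> \<open>v \<in> I\<close>] pne by (auto split: if_splits)
  qed
  let ?S = "E ` I"
  have orth: "pairwise orthogonal ?S"
    unfolding pairwise_def orthogonal_def using innE by auto
  have n0: "0 \<notin> ?S" using innE pne by force
  have ind: "independent ?S" by (rule pairwise_orthogonal_independent[OF orth n0])
  have cardS: "card ?S = ?p * ?p * 2"
    using card_image[OF injE] by (simp add: I_def card_cartesian_product)
  have "dim (UNIV :: (complex^'n^'n) set) = ?p * ?p * 2"
    by (simp add: dim_UNIV)
  then have sp: "UNIV \<subseteq> span ?S"
    using card_ge_dim_independent[OF _ ind, of UNIV] cardS by simp
  have oC: "orthogonal C Y" if Y: "Y \<in> ?S" for Y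
  proof -
    obtain u where u: "u \<in> I" "Y = E u" using Y by (meson imageE)
    obtain i j s where uu: "u = (i,j,s)" by (cases u) auto
    have b: "i < ?p" "j < ?p" using u uu by (auto simp: I_def)
    have "Fm (E u) C = 0" using FgC[OF b] by (auto simp: uu E_def Fm_smul_left)
    then have "inner (E u) C = 0" by (simp add: inner_Fm)
    then show ?thesis using u by (simp add: orthogonal_def inner_commute)
  qed
  have "orthogonal C C" by (rule orthogonal_to_span[OF _ oC]) (use sp in auto)
  then have "C = 0" by (simp add: orthogonal_def)
  then show ?thesis by (auto simp: C_def)
qed

lemma qc_eq1: "qc u M 1 \<Longrightarrow> u ** M = M ** u"
  by (simp add: qc_def smul_1)

theorem lemma3p3:
  fixes x y z :: "nat \<Rightarrow> complex^'n^'n" and c :: "complex^'n^'n"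
    and m a b :: nat
  assumes "prime CARD('n)" and "m \<ge> 1"
    and "\<forall>i<m. x i \<in> SU" and "\<forall>i<m. y i \<in> SU" and "\<forall>i<m. z i \<in> SU"
    and "c \<in> ZSU" and "c \<noteq> mat 1"
    and "\<forall>i<m. comm (x i) (y i) = c"
    and "a < CARD('n)" and "b < CARD('n)"
    and "\<forall>i<m. comm (x i) (z i) = mpow c b"
    and "\<forall>i<m. comm (y i) (z i) = mpow c a"
  shows "\<exists>w :: nat \<Rightarrow> complex^'n^'n. (\<forall>i<m. w i \<in> ZSU) \<and>
           (\<forall>i<m. z i = w i ** mpow (matrix_inv (x i)) a ** mpow (y i) b)"
proof -
  obtain \<zeta> where c: "c = mat \<zeta>" using ZSU_scalar[OF assms(6)] by blast
  have "det c = 1" using assms(6) by (simp add: ZSU_def SU_def)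
  moreover have "c = diag (\<lambda>_. \<zeta>)" by (simp add: c diag_def mat_def)
  ultimately have zp: "\<zeta> ^ CARD('n) = 1" by (simp add: det_diag)
  have z1: "\<zeta> \<noteq> 1" using assms(7) c by auto
  have z0: "\<zeta> \<noteq> 0" using zp by (auto simp: power_0_left)
  define u where "u i = mpow (matrix_inv (x i)) a ** mpow (y i) b" for i
  define w where "w i = z i ** matrix_inv (u i)" for i
  have main: "w i \<in> ZSU \<and> z i = w i ** mpow (matrix_inv (x i)) a ** mpow (y i) b" if i: "i < m" for i
  proof -
    have xs: "x i \<in> SU" and ys: "y i \<in> SU" and zs: "z i \<in> SU" using assms i by auto
    have uS: "u i \<in> SU" by (simp add: u_def SU_mult SU_mpow SU_inv xs ys)
    have wS: "w i \<in> SU" by (simp add: w_def SU_mult SU_inv uS zs)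
    have qxy: "qc (x i) (y i) \<zeta>" using comm_qc[OF xs ys] assms(8) i c by simp
    have qxz: "qc (x i) (z i) (\<zeta>^b)" using comm_qc[OF xs zs] assms(11) i c by (simp add: mpow_mat)
    have qyz: "qc (y i) (z i) (\<zeta>^a)" using comm_qc[OF ys zs] assms(12) i c by (simp add: mpow_mat)
    have qyx: "qc (y i) (x i) (1/\<zeta>)" by (rule qc_swap[OF qxy z0])
    have "qc (x i) (u i) (1^a * \<zeta>^b)"
      unfolding u_def
      by (rule qc_mult[OF qc_mpow[OF qc_inv_SU[OF qc_self xs, simplified]] qc_mpow[OF qxy]])
    then have qxu: "qc (x i) (u i) (\<zeta>^b)" by simp
    have "qc (x i) (w i) (\<zeta>^b * (1/\<zeta>^b))"
      unfolding w_def by (rule qc_mult[OF qxz qc_inv_SU[OF qxu uS]]) (simp add: z0)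
    then have wx: "x i ** w i = w i ** x i" using z0 by (intro qc_eq1) simp
    have "qc (y i) (u i) ((1 / (1/\<zeta>))^a * 1^b)"
      unfolding u_def
      by (rule qc_mult[OF qc_mpow[OF qc_inv_SU[OF qyx xs]] qc_mpow[OF qc_self]]) (simp add: z0)
    then have qyu: "qc (y i) (u i) (\<zeta>^a)" by simp
    have "qc (y i) (w i) (\<zeta>^a * (1/\<zeta>^a))"
      unfolding w_def by (rule qc_mult[OF qyz qc_inv_SU[OF qyu uS]]) (simp add: z0)
    then have wy: "y i ** w i = w i ** y i" using z0 by (intro qc_eq1) simp
    obtain \<mu> where wm: "w i = mat \<mu>" using irred[OF assms(1) xs ys qxy zp z1 wx wy] by blast
    have "w i \<in> ZSU" using wS wm by (auto simp: ZSU_def mat_comm)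
    moreover have "w i ** u i = z i"
      using uS by (simp add: w_def matrix_mul_assoc[symmetric] SU_linv)
    ultimately show ?thesis by (simp add: u_def matrix_mul_assoc)
  qed
  show ?thesis by (rule exI[of _ w]) (use main in blast)
qed
end
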